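(* Let an instance be given with $x_i,r_i\in\mathbb{N}$ for all $i=1,\dots,n$ and $L\in\mathbb{N}$, and suppose it admits a feasible solution. Then there exists a minimum-cost feasible solution $y$ with $y_i\in\mathbb{Z}$ for every $i$.
   Context: A solution is $y\in\mathbb{R}^n$; sensor $i$ at $y_i$ covers $[y_i-r_i,y_i+r_i]$; $y$ is feasible if $[0,L]\subseteq\bigcup_i[y_i-r_i,y_i+r_i]$; its cost is $\sum_i|y_i-x_i|$. *)

theory Defs
  imports Complex_Main
begin

text \<open>Sensors are indexed by i < n (the paper's 1..n). A solution is y :: nat => real,
  only its values on {..<n} matter.\<close>

definition feasible :: "nat \<Rightarrow> (nat \<Rightarrow> real) \<Rightarrow> real \<Rightarrow> (nat \<Rightarrow> real) \<Rightarrow> bool" where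
  "feasible n r L y \<longleftrightarrow> {0..L} \<subseteq> (\<Union>i<n. {y i - r i .. y i + r i})"

definition cost :: "nat \<Rightarrow> (nat \<Rightarrow> real) \<Rightarrow> (nat \<Rightarrow> real) \<Rightarrow> real" where
  "cost n x y = (\<Sum>i<n. \<bar>y i - x i\<bar>)"

end

theory Submission imports Defs "HOL-Analysis.Analysis" begin

lemma ceil_shift:
  fixes y t :: real
  assumes "0 \<le> t" "t < 1"
  shows "\<lceil>y - t\<rceil> = (if t < y - of_int \<lfloor>y\<rfloor> then \<lfloor>y\<rfloor> + 1 else \<lfloor>y\<rfloor>)"
proof -
  have a: "of_int \<lfloor>y\<rfloor> \<le> y" "y < of_int \<lfloor>y\<rfloor> + 1" by linarith+
  show ?thesis
  proof (cases "t < y - of_int \<lfloor>y\<rfloor>")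
    case True
    have "\<lceil>y - t\<rceil> = \<lfloor>y\<rfloor> + 1" using a assms True by (intro ceiling_unique; simp; linarith)
    then show ?thesis using True by simp
  next
    case False
    have "\<lceil>y - t\<rceil> = \<lfloor>y\<rfloor>" using a assms False by (intro ceiling_unique; simp; linarith)
    then show ?thesis using False by simp
  qed
qed

lemma round_integral:
  fixes y :: real and m :: int
  shows "((\<lambda>t. \<bar>of_int \<lceil>y - t\<rceil> - of_int m\<bar>) has_integral \<bar>y - of_int m\<bar>) {0..1}"
proof -
  define k where "k = \<lfloor>y\<rfloor>"
  define f where "f = y - of_int k"
  have f: "0 \<le> f" "f < 1" unfolding f_def k_def by linarith+
  have A: "((\<lambda>t. \<bar>of_int \<lceil>y - t\<rceil> - of_int m\<bar>) has_integral f * \<bar>of_int k + 1 - of_int m\<bar>) {0..f}"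
  proof (rule has_integral_spike_finite[of "{f}"])
    show "((\<lambda>t. \<bar>of_int k + 1 - of_int m\<bar>) has_integral f * \<bar>of_int k + 1 - of_int m\<bar>) {0..f}"
      using has_integral_const_real[of "\<bar>of_int k + 1 - of_int m\<bar>::real" 0 f] f by simp
    fix t assume "t \<in> {0..f} - {f}"
    then have "0 \<le> t" "t < f" by auto
    then show "\<bar>of_int \<lceil>y - t\<rceil> - of_int m\<bar> = \<bar>of_int k + 1 - (of_int m::real)\<bar>"
      using ceil_shift[of t y] f unfolding f_def k_def by simp
  qed simp
  have B: "((\<lambda>t. \<bar>of_int \<lceil>y - t\<rceil> - of_int m\<bar>) has_integral (1 - f) * \<bar>of_int k - of_int m\<bar>) {f..1}"
  proof (rule has_integral_spike_finite[of "{1}"])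
    show "((\<lambda>t. \<bar>of_int k - of_int m\<bar>) has_integral (1 - f) * \<bar>of_int k - of_int m\<bar>) {f..1}"
      using has_integral_const_real[of "\<bar>of_int k - of_int m\<bar>::real" f 1] f by simp
    fix t assume "t \<in> {f..1} - {1}"
    then have "f \<le> t" "t < 1" by auto
    then show "\<bar>of_int \<lceil>y - t\<rceil> - of_int m\<bar> = \<bar>of_int k - (of_int m::real)\<bar>"
      using ceil_shift[of t y] f unfolding f_def k_def by simp
  qed simp
  have C: "f * \<bar>of_int k + 1 - of_int m\<bar> + (1 - f) * \<bar>of_int k - of_int m\<bar> = \<bar>y - of_int m\<bar>"
  proof (cases "k \<ge> m")
    case True
    then have "(of_int k::real) \<ge> of_int m" by simp
    then show ?thesis using f unfolding f_def by (simp add: algebra_simps)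
  next
    case False
    then have "(of_int k::real) + 1 \<le> of_int m" by (metis add_le_imp_le_left add_le_cancel_right le_less of_int_1 of_int_add of_int_le_iff zless_imp_add1_zle not_le)
    then show ?thesis using f unfolding f_def by (simp add: algebra_simps)
  qed
  show ?thesis using has_integral_combine[OF _ _ A B] f C by simp
qed

lemma exists_good_theta:
  fixes y :: "nat \<Rightarrow> real" and x :: "nat \<Rightarrow> nat"
  shows "\<exists>t. 0 \<le> t \<and> t < 1 \<and>
     (\<Sum>i<n. \<bar>of_int \<lceil>y i - t\<rceil> - real (x i)\<bar>) \<le> (\<Sum>i<n. \<bar>y i - real (x i)\<bar>)"
proof -
  define S where "S t = (\<Sum>i<n. \<bar>of_int \<lceil>y i - t\<rceil> - real (x i)\<bar>)" for t
  define G where "G K = (\<Sum>i<n. if i \<in> K then \<bar>of_int \<lfloor>y i\<rfloor> + 1 - real (x i)\<bar>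
                                 else \<bar>of_int \<lfloor>y i\<rfloor> - real (x i)\<bar>)" for K
  have SG: "S t = G {i. i < n \<and> t < y i - of_int \<lfloor>y i\<rfloor>}" if "0 \<le> t" "t < 1" for t
    unfolding S_def G_def by (rule sum.cong) (auto simp: ceil_shift[OF that])
  have sub: "S ` {0..<1} \<subseteq> G ` Pow {..<n}"
    using SG by (auto intro!: imageI)
  have fin: "finite (S ` {0..<1})"
    by (rule finite_subset[OF sub]) auto
  have ne: "S ` {0..<1} \<noteq> {}" by auto
  obtain t0 where t0: "t0 \<in> {0..<1}" "S t0 = Min (S ` {0..<1})"
    using Min_in[OF fin ne] by auto
  have le: "S t0 \<le> S t" if "t \<in> {0..<1}" for t
    using t0 Min_le[OF fin] that by auto
  have I: "(S has_integral (\<Sum>i<n. \<bar>y i - real (x i)\<bar>)) {0..1}"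
    unfolding S_def
    using has_integral_sum[of "{..<n}" "\<lambda>i t. \<bar>of_int \<lceil>y i - t\<rceil> - real (x i)\<bar>"
        "\<lambda>i. \<bar>y i - real (x i)\<bar>" "{0..1}"]
      round_integral[of "y _" "int (x _)"] by simp
  have I2: "((\<lambda>t. if t = 1 then S t0 else S t) has_integral (\<Sum>i<n. \<bar>y i - real (x i)\<bar>)) {0..1}"
    by (rule has_integral_spike_finite[OF _ _ I, of "{1}"]) auto
  have I3: "((\<lambda>t::real. S t0) has_integral S t0) {0..1}"
    using has_integral_const_real[of "S t0" 0 1] by simp
  have "S t0 \<le> (\<Sum>i<n. \<bar>y i - real (x i)\<bar>)"
    by (rule has_integral_le[OF I3 I2]) (use le in auto)
  then show ?thesis using t0 unfolding S_def by auto
qed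

lemma right_open_cover:
  fixes y :: "nat \<Rightarrow> real" and r :: "nat \<Rightarrow> nat" and L :: nat
  assumes feas: "feasible n (\<lambda>i. real (r i)) (real L) y" and t: "0 \<le> t" "t < real L"
  shows "\<exists>i<n. y i - r i \<le> t \<and> t < y i + r i"
proof (rule ccontr)
  assume H0: "\<not> ?thesis"
  have H: "y i + r i \<le> t" if "i < n" "y i - r i \<le> t" for i
    using H0 that by force
  define D where "D = {y i - r i - t | i. i < n \<and> y i - r i > t} \<union> {real L - t}"
  have finD: "finite D" unfolding D_def by auto
  have neD: "D \<noteq> {}" unfolding D_def by auto
  have posD: "\<forall>d\<in>D. d > 0" unfolding D_def using t by auto
  define d where "d = Min D"
  have dpos: "d > 0" unfolding d_def using Min_in[OF finD neD] posD by auto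
  have dle: "d \<le> e" if "e \<in> D" for e unfolding d_def using Min_le[OF finD that] .
  define p where "p = t + d / 2"
  have "d \<le> real L - t" using dle unfolding D_def by auto
  then have "p \<in> {0..real L}" unfolding p_def using t dpos by auto
  then obtain i where i: "i < n" "y i - r i \<le> p" "p \<le> y i + r i"
    using feas unfolding feasible_def by auto
  show False
  proof (cases "y i - r i \<le> t")
    case True then show False using H[OF i(1) True] i dpos unfolding p_def by auto
  next
    case False
    then have "y i - r i - t \<in> D" unfolding D_def using i(1) by auto
    then have "d \<le> y i - r i - t" by (rule dle)
    then show False using i dpos unfolding p_def by auto
  qed
qed

lemma round_feasible:
  fixes y :: "nat \<Rightarrow> real" and r :: "nat \<Rightarrow> nat" and L :: nat
  assumes feas: "feasible n (\<lambda>i. real (r i)) (real L) y" and th: "0 \<le> t" "t < 1"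
  shows "feasible n (\<lambda>i. real (r i)) (real L) (\<lambda>i. of_int \<lceil>y i - t\<rceil>)"
  unfolding feasible_def
proof
  fix s assume s: "s \<in> {0..real L}"
  show "s \<in> (\<Union>i<n. {of_int \<lceil>y i - t\<rceil> - real (r i)..of_int \<lceil>y i - t\<rceil> + real (r i)})"
  proof (cases "s = of_int \<lfloor>s\<rfloor>")
    case True
    define j where "j = \<lfloor>s\<rfloor>"
    obtain i where i: "i < n" "y i - r i \<le> s" "s \<le> y i + r i"
      using feas s unfolding feasible_def by auto
    have "\<lceil>y i - t\<rceil> \<le> j + int (r i)"
      unfolding ceiling_le_iff using i th True unfolding j_def by simp
    moreover have "j - int (r i) \<le> \<lceil>y i - t\<rceil>"
      unfolding le_ceiling_iff using i th True unfolding j_def by simp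
    ultimately show ?thesis using i(1) True unfolding j_def
      by (auto intro!: bexI[of _ i])
  next
    case False
    define m where "m = \<lfloor>s\<rfloor>"
    have ms: "of_int m < s" "s < of_int m + 1" using False unfolding m_def by linarith+
    have m0: "0 \<le> m" using s ms unfolding m_def by auto
    have "m < int L" using ms s by auto
    then have mL: "of_int m + 1 \<le> real L" by linarith
    obtain i where i: "i < n" "y i - r i \<le> of_int m + t" "of_int m + t < y i + r i"
      using right_open_cover[OF feas, of "of_int m + t"] m0 mL th by auto
    have "\<lceil>y i - t\<rceil> \<le> m + int (r i)"
      unfolding ceiling_le_iff using i by simp
    moreover have "m - int (r i) + 1 \<le> \<lceil>y i - t\<rceil>"
      unfolding le_ceiling_iff using i by simp
    ultimately have "real_of_int \<lceil>y i - t\<rceil> \<le> real_of_int (m + int (r i))"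
        "real_of_int (m - int (r i) + 1) \<le> real_of_int \<lceil>y i - t\<rceil>"
      by (simp_all only: of_int_le_iff)
    then have A: "real_of_int \<lceil>y i - t\<rceil> \<le> of_int m + real (r i)"
        "of_int m - real (r i) + 1 \<le> real_of_int \<lceil>y i - t\<rceil>"
      by simp_all
    have "of_int \<lceil>y i - t\<rceil> - real (r i) \<le> s" "s \<le> of_int \<lceil>y i - t\<rceil> + real (r i)"
      using A ms by linarith+
    then show ?thesis using i(1) by auto
  qed
qed

lemma round_better:
  fixes z :: "nat \<Rightarrow> real" and r x :: "nat \<Rightarrow> nat" and L :: nat
  assumes "feasible n (\<lambda>i. real (r i)) (real L) z"
  shows "\<exists>w. feasible n (\<lambda>i. real (r i)) (real L) w
           \<and> cost n (\<lambda>i. real (x i)) w \<le> cost n (\<lambda>i. real (x i)) z \<and> (\<forall>i. w i \<in> \<int>)"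
proof -
  obtain t where t: "0 \<le> t" "t < 1"
    "(\<Sum>i<n. \<bar>of_int \<lceil>z i - t\<rceil> - real (x i)\<bar>) \<le> (\<Sum>i<n. \<bar>z i - real (x i)\<bar>)"
    using exists_good_theta by blast
  show ?thesis
    by (rule exI[of _ "\<lambda>i. of_int \<lceil>z i - t\<rceil>"])
       (use t round_feasible[OF assms t(1,2)] in \<open>auto simp: cost_def\<close>)
qed

lemma int_cost:
  fixes w :: "nat \<Rightarrow> real" and x :: "nat \<Rightarrow> nat"
  assumes "\<forall>i. w i \<in> \<int>"
  shows "\<exists>k::nat. cost n (\<lambda>i. real (x i)) w = real k"
proof -
  have "cost n (\<lambda>i. real (x i)) w \<in> \<int>"
    unfolding cost_def using assms by (intro Ints_sum Ints_abs Ints_diff) auto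
  then obtain z where z: "cost n (\<lambda>i. real (x i)) w = of_int z" by (auto elim: Ints_cases)
  have "cost n (\<lambda>i. real (x i)) w \<ge> 0" unfolding cost_def by (simp add: sum_nonneg)
  then have "z \<ge> 0" using z by simp
  then show ?thesis using z by (intro exI[of _ "nat z"]) simp
qed

theorem lemmaA1:
  fixes n L :: nat and x r :: "nat \<Rightarrow> nat"
  assumes "\<exists>y. feasible n (\<lambda>i. real (r i)) (real L) y"
  shows "\<exists>y. feasible n (\<lambda>i. real (r i)) (real L) y
           \<and> (\<forall>z. feasible n (\<lambda>i. real (r i)) (real L) z \<longrightarrow>
                  cost n (\<lambda>i. real (x i)) y \<le> cost n (\<lambda>i. real (x i)) z)
           \<and> (\<forall>i<n. y i \<in> \<int>)"
proof -
  define P where "P k \<longleftrightarrow> (\<exists>w. feasible n (\<lambda>i. real (r i)) (real L) w \<and> (\<forall>i. w i \<in> \<int>)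
                             \<and> cost n (\<lambda>i. real (x i)) w = real k)" for k
  obtain y0 where y0: "feasible n (\<lambda>i. real (r i)) (real L) y0" using assms by blast
  obtain w0 where w0: "feasible n (\<lambda>i. real (r i)) (real L) w0" "\<forall>i. w0 i \<in> \<int>"
    using round_better[OF y0, of x] by blast
  obtain k0 where "cost n (\<lambda>i. real (x i)) w0 = real k0" using int_cost[OF w0(2)] by blast
  then have "P k0" unfolding P_def using w0 by blast
  then have "P (LEAST k. P k)" by (rule LeastI)
  then obtain w where w: "feasible n (\<lambda>i. real (r i)) (real L) w" "\<forall>i. w i \<in> \<int>"
    "cost n (\<lambda>i. real (x i)) w = real (LEAST k. P k)" unfolding P_def by blast
  have "cost n (\<lambda>i. real (x i)) w \<le> cost n (\<lambda>i. real (x i)) z"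
    if z: "feasible n (\<lambda>i. real (r i)) (real L) z" for z
  proof -
    obtain v where v: "feasible n (\<lambda>i. real (r i)) (real L) v"
      "cost n (\<lambda>i. real (x i)) v \<le> cost n (\<lambda>i. real (x i)) z" "\<forall>i. v i \<in> \<int>"
      using round_better[OF z, of x] by blast
    obtain k where k: "cost n (\<lambda>i. real (x i)) v = real k" using int_cost[OF v(3)] by blast
    then have "P k" unfolding P_def using v by blast
    then have "(LEAST k. P k) \<le> k" by (rule Least_le)
    then show ?thesis using w(3) k v(2) by simp
  qed
  then show ?thesis using w by blast
qed

end
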